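(* Let $A$ be a commutative monoid which is a domain (if $A$ has no zero: $A$ is cancellative; if $A$ is a monoid with zero: $A\setminus\{0\}$ is a cancellative submonoid). Then every projective $A$-module is free.
   Context: If $A$ has no zero, an $A$-module is a set with a unital associative $A$-action; if $A$ has a zero, it is a pointed set with an action in which $0$ acts by sending everything to the base point, which is fixed. Free modules are coproducts (disjoint unions, resp. wedge sums) of copies of $A$. A module is projective if every surjection onto it has a section, equivalently if it is a retract of a free module. *)

theory Defs
  imports "HOL-Algebra.Group"
begin

definition cancellative :: "('a, 'b) monoid_scheme \<Rightarrow> bool" where
  "cancellative A \<longleftrightarrow>
     (\<forall>a\<in>carrier A. \<forall>b\<in>carrier A. \<forall>c\<in>carrier A. a \<otimes>\<^bsub>A\<^esub> b = a \<otimes>\<^bsub>A\<^esub> c \<longrightarrow> b = c)"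

definition set_module :: "('a, 'b) monoid_scheme \<Rightarrow> 'm set \<Rightarrow> ('a \<Rightarrow> 'm \<Rightarrow> 'm) \<Rightarrow> bool" where
  "set_module A M act \<longleftrightarrow>
     (\<forall>a\<in>carrier A. \<forall>x\<in>M. act a x \<in> M) \<and>
     (\<forall>x\<in>M. act \<one>\<^bsub>A\<^esub> x = x) \<and>
     (\<forall>a\<in>carrier A. \<forall>b\<in>carrier A. \<forall>x\<in>M. act (a \<otimes>\<^bsub>A\<^esub> b) x = act a (act b x))"

definition set_module_hom ::
  "('a, 'b) monoid_scheme \<Rightarrow> 'm set \<Rightarrow> ('a \<Rightarrow> 'm \<Rightarrow> 'm) \<Rightarrow> 'n set \<Rightarrow> ('a \<Rightarrow> 'n \<Rightarrow> 'n)
     \<Rightarrow> ('m \<Rightarrow> 'n) \<Rightarrow> bool" where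
  "set_module_hom A M act N act' f \<longleftrightarrow>
     (\<forall>x\<in>M. f x \<in> N) \<and> (\<forall>a\<in>carrier A. \<forall>x\<in>M. f (act a x) = act' a (f x))"

text \<open>Free module on index set I: the disjoint union of copies of A, i.e. I \<times> A.\<close>
definition free_set_module_carrier :: "('a, 'b) monoid_scheme \<Rightarrow> 'i set \<Rightarrow> ('i \<times> 'a) set" where
  "free_set_module_carrier A I = I \<times> carrier A"

definition free_set_module_act :: "('a, 'b) monoid_scheme \<Rightarrow> 'a \<Rightarrow> ('i \<times> 'a) \<Rightarrow> ('i \<times> 'a)" where
  "free_set_module_act A a p = (fst p, a \<otimes>\<^bsub>A\<^esub> snd p)"

text \<open>M is free if it is isomorphic to a coproduct of copies of A. An index set of such an
  isomorphism injects into M (i \<mapsto> \<phi>(i,1)), so index sets of the carrier type of M suffice.\<close>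
definition set_module_free :: "('a, 'b) monoid_scheme \<Rightarrow> 'm set \<Rightarrow> ('a \<Rightarrow> 'm \<Rightarrow> 'm) \<Rightarrow> bool" where
  "set_module_free A M act \<longleftrightarrow>
     (\<exists>(I :: 'm set) \<phi>.
        set_module_hom A (free_set_module_carrier A I) (free_set_module_act A) M act \<phi> \<and>
        bij_betw \<phi> (free_set_module_carrier A I) M)"

text \<open>Projective: every surjection onto M (from any module) has a section. Since HOL cannot
  quantify over types inside a formula, we use the (stated) equivalent: M is a retract of a
  free module; the canonical free cover (indexed by M itself) shows index sets of the carrier
  type of M suffice.\<close>
definition set_module_projective :: "('a, 'b) monoid_scheme \<Rightarrow> 'm set \<Rightarrow> ('a \<Rightarrow> 'm \<Rightarrow> 'm) \<Rightarrow> bool" where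
  "set_module_projective A M act \<longleftrightarrow>
     (\<exists>(I :: 'm set) r s.
        set_module_hom A (free_set_module_carrier A I) (free_set_module_act A) M act r \<and>
        set_module_hom A M act (free_set_module_carrier A I) (free_set_module_act A) s \<and>
        (\<forall>x\<in>M. r (s x) = x))"

definition is_zero_of :: "('a, 'b) monoid_scheme \<Rightarrow> 'a \<Rightarrow> bool" where
  "is_zero_of A z \<longleftrightarrow> z \<in> carrier A \<and>
     (\<forall>a\<in>carrier A. z \<otimes>\<^bsub>A\<^esub> a = z \<and> a \<otimes>\<^bsub>A\<^esub> z = z)"

definition domain_with_zero :: "('a, 'b) monoid_scheme \<Rightarrow> 'a \<Rightarrow> bool" where
  "domain_with_zero A z \<longleftrightarrow>
     \<one>\<^bsub>A\<^esub> \<noteq> z \<and>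
     (\<forall>a\<in>carrier A - {z}. \<forall>b\<in>carrier A - {z}. a \<otimes>\<^bsub>A\<^esub> b \<noteq> z) \<and>
     (\<forall>a\<in>carrier A - {z}. \<forall>b\<in>carrier A - {z}. \<forall>c\<in>carrier A - {z}.
        a \<otimes>\<^bsub>A\<^esub> b = a \<otimes>\<^bsub>A\<^esub> c \<longrightarrow> b = c)"

definition pointed_module ::
  "('a, 'b) monoid_scheme \<Rightarrow> 'a \<Rightarrow> 'm set \<Rightarrow> 'm \<Rightarrow> ('a \<Rightarrow> 'm \<Rightarrow> 'm) \<Rightarrow> bool" where
  "pointed_module A z M bp act \<longleftrightarrow>
     bp \<in> M \<and> set_module A M act \<and>
     (\<forall>x\<in>M. act z x = bp) \<and> (\<forall>a\<in>carrier A. act a bp = bp)"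

definition pointed_module_hom ::
  "('a, 'b) monoid_scheme \<Rightarrow> 'm set \<Rightarrow> 'm \<Rightarrow> ('a \<Rightarrow> 'm \<Rightarrow> 'm) \<Rightarrow> 'n set \<Rightarrow> 'n \<Rightarrow> ('a \<Rightarrow> 'n \<Rightarrow> 'n)
     \<Rightarrow> ('m \<Rightarrow> 'n) \<Rightarrow> bool" where
  "pointed_module_hom A M bp act N bp' act' f \<longleftrightarrow>
     f bp = bp' \<and> set_module_hom A M act N act' f"

text \<open>Free pointed module on I: the wedge sum of copies of A; the base point is None and
  the non-base points are the pairs (i, a) with a \<noteq> 0.\<close>
definition free_pointed_carrier :: "('a, 'b) monoid_scheme \<Rightarrow> 'a \<Rightarrow> 'i set \<Rightarrow> ('i \<times> 'a) option set" where
  "free_pointed_carrier A z I = insert None (Some ` (I \<times> (carrier A - {z})))"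

definition free_pointed_act :: "('a, 'b) monoid_scheme \<Rightarrow> 'a \<Rightarrow> 'a \<Rightarrow> ('i \<times> 'a) option \<Rightarrow> ('i \<times> 'a) option" where
  "free_pointed_act A z a p =
     (case p of None \<Rightarrow> None
      | Some (i, b) \<Rightarrow> (if a \<otimes>\<^bsub>A\<^esub> b = z then None else Some (i, a \<otimes>\<^bsub>A\<^esub> b)))"

definition pointed_module_free ::
  "('a, 'b) monoid_scheme \<Rightarrow> 'a \<Rightarrow> 'm set \<Rightarrow> 'm \<Rightarrow> ('a \<Rightarrow> 'm \<Rightarrow> 'm) \<Rightarrow> bool" where
  "pointed_module_free A z M bp act \<longleftrightarrow>
     (\<exists>(I :: 'm set) \<phi>.
        pointed_module_hom A (free_pointed_carrier A z I) None (free_pointed_act A z) M bp act \<phi> \<and>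
        bij_betw \<phi> (free_pointed_carrier A z I) M)"

definition pointed_module_projective ::
  "('a, 'b) monoid_scheme \<Rightarrow> 'a \<Rightarrow> 'm set \<Rightarrow> 'm \<Rightarrow> ('a \<Rightarrow> 'm \<Rightarrow> 'm) \<Rightarrow> bool" where
  "pointed_module_projective A z M bp act \<longleftrightarrow>
     (\<exists>(I :: 'm set) r s.
        pointed_module_hom A (free_pointed_carrier A z I) None (free_pointed_act A z) M bp act r \<and>
        pointed_module_hom A M bp act (free_pointed_carrier A z I) None (free_pointed_act A z) s \<and>
        (\<forall>x\<in>M. r (s x) = x))"

end

theory Submission
  imports Defs
begin

lemma free_case:
  fixes M :: "'m set"
  assumes A: "monoid A" and canc: "cancellative A" and pr: "set_module_projective A M act"
  shows "set_module_free A M act"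
proof -
  obtain I :: "'m set" and r s where
    r: "set_module_hom A (free_set_module_carrier A I) (free_set_module_act A) M act r" and
    s: "set_module_hom A M act (free_set_module_carrier A I) (free_set_module_act A) s" and
    rs: "\<forall>x\<in>M. r (s x) = x"
    using pr unfolding set_module_projective_def by blast
  have rM: "\<And>i a. i \<in> I \<Longrightarrow> a \<in> carrier A \<Longrightarrow> r (i, a) \<in> M"
    using r by (auto simp: set_module_hom_def free_set_module_carrier_def)
  have rh: "\<And>i a b. i \<in> I \<Longrightarrow> a \<in> carrier A \<Longrightarrow> b \<in> carrier A \<Longrightarrow>
      r (i, a \<otimes>\<^bsub>A\<^esub> b) = act a (r (i, b))"
    using r unfolding set_module_hom_def free_set_module_carrier_def free_set_module_act_def
    by (metis SigmaI fst_conv snd_conv)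
  have sF: "\<And>x. x \<in> M \<Longrightarrow> s x \<in> I \<times> carrier A"
    using s by (auto simp: set_module_hom_def free_set_module_carrier_def)
  have sh: "\<And>a x. a \<in> carrier A \<Longrightarrow> x \<in> M \<Longrightarrow>
      s (act a x) = (fst (s x), a \<otimes>\<^bsub>A\<^esub> snd (s x))"
    using s unfolding set_module_hom_def free_set_module_act_def by blast
  define J where "J = {i\<in>I. s (r (i, \<one>\<^bsub>A\<^esub>)) = (i, \<one>\<^bsub>A\<^esub>)}"
  have one: "\<one>\<^bsub>A\<^esub> \<in> carrier A" using A by (simp add: monoid.one_closed)
  have key: "s (r (j, a)) = (j, a)" if j: "j \<in> J" and a: "a \<in> carrier A" for j a
  proof -
    have jI: "j \<in> I" and e: "s (r (j, \<one>\<^bsub>A\<^esub>)) = (j, \<one>\<^bsub>A\<^esub>)" using j J_def by auto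
    have "r (j, a) = act a (r (j, \<one>\<^bsub>A\<^esub>))"
      using rh[OF jI a one] a A by (simp add: monoid.r_one)
    then have "s (r (j, a)) = (j, a \<otimes>\<^bsub>A\<^esub> \<one>\<^bsub>A\<^esub>)"
      using sh[OF a rM[OF jI one]] e by simp
    then show ?thesis using a A by (simp add: monoid.r_one)
  qed
  have JI: "J \<subseteq> I" unfolding J_def by auto
  have hom: "set_module_hom A (free_set_module_carrier A J) (free_set_module_act A) M act r"
    using r JI unfolding set_module_hom_def free_set_module_carrier_def free_set_module_act_def
    by blast
  have inj: "inj_on r (free_set_module_carrier A J)"
  proof (rule inj_onI)
    fix p q assume p: "p \<in> free_set_module_carrier A J" and q: "q \<in> free_set_module_carrier A J"
      and "r p = r q"
    then have "s (r p) = s (r q)" by simp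
    moreover have "s (r p) = p" using p key by (auto simp: free_set_module_carrier_def)
    moreover have "s (r q) = q" using q key by (auto simp: free_set_module_carrier_def)
    ultimately show "p = q" by simp
  qed
  have img: "r ` free_set_module_carrier A J = M"
  proof
    show "r ` free_set_module_carrier A J \<subseteq> M" using hom by (auto simp: set_module_hom_def)
  next
    show "M \<subseteq> r ` free_set_module_carrier A J"
    proof
      fix x assume x: "x \<in> M"
      obtain i a where sx: "s x = (i, a)" and iI: "i \<in> I" and a: "a \<in> carrier A"
        using sF[OF x] by auto
      obtain j c where e: "s (r (i, \<one>\<^bsub>A\<^esub>)) = (j, c)" and c: "c \<in> carrier A"
        using sF[OF rM[OF iI one]] by (metis SigmaE)
      have "r (i, a) = act a (r (i, \<one>\<^bsub>A\<^esub>))"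
        using rh[OF iI a one] a A by (simp add: monoid.r_one)
      then have "s (r (i, a)) = (j, a \<otimes>\<^bsub>A\<^esub> c)"
        using sh[OF a rM[OF iI one]] e by simp
      moreover have "s (r (i, a)) = (i, a)" using rs x sx by metis
      ultimately have ji: "j = i" and ac: "a \<otimes>\<^bsub>A\<^esub> c = a \<otimes>\<^bsub>A\<^esub> \<one>\<^bsub>A\<^esub>"
        using a A by (auto simp: monoid.r_one)
      have "c = \<one>\<^bsub>A\<^esub>" using canc c ac a one unfolding cancellative_def by blast
      then have "i \<in> J" using e ji iI J_def by auto
      moreover have "x = r (i, a)" using rs x sx by metis
      ultimately show "x \<in> r ` free_set_module_carrier A J"
        using a by (auto simp: free_set_module_carrier_def)
    qed
  qed
  show ?thesis unfolding set_module_free_def bij_betw_def using hom inj img by blast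
qed

lemma pointed_case:
  fixes M :: "'m set"
  assumes A: "monoid A" and z: "is_zero_of A z" and d: "domain_with_zero A z"
    and pr: "pointed_module_projective A z M bp act"
  shows "pointed_module_free A z M bp act"
proof -
  obtain I :: "'m set" and r s where
    r: "pointed_module_hom A (free_pointed_carrier A z I) None (free_pointed_act A z) M bp act r" and
    s: "pointed_module_hom A M bp act (free_pointed_carrier A z I) None (free_pointed_act A z) s" and
    rs: "\<forall>x\<in>M. r (s x) = x"
    using pr unfolding pointed_module_projective_def by blast
  have one: "\<one>\<^bsub>A\<^esub> \<in> carrier A" using A by (simp add: monoid.one_closed)
  have onez: "\<one>\<^bsub>A\<^esub> \<noteq> z" using d by (simp add: domain_with_zero_def)
  have rM: "\<And>p. p \<in> free_pointed_carrier A z I \<Longrightarrow> r p \<in> M"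
    using r by (auto simp: pointed_module_hom_def set_module_hom_def)
  have rN: "r None = bp" using r by (simp add: pointed_module_hom_def)
  have rh: "\<And>p a. p \<in> free_pointed_carrier A z I \<Longrightarrow> a \<in> carrier A \<Longrightarrow>
      r (free_pointed_act A z a p) = act a (r p)"
    using r by (auto simp: pointed_module_hom_def set_module_hom_def)
  have sF: "\<And>x. x \<in> M \<Longrightarrow> s x \<in> free_pointed_carrier A z I"
    using s by (auto simp: pointed_module_hom_def set_module_hom_def)
  have sN: "s bp = None" using s by (simp add: pointed_module_hom_def)
  have sh: "\<And>a x. a \<in> carrier A \<Longrightarrow> x \<in> M \<Longrightarrow>
      s (act a x) = free_pointed_act A z a (s x)"
    using s by (auto simp: pointed_module_hom_def set_module_hom_def)
  have actone: "free_pointed_act A z a (Some (i, \<one>\<^bsub>A\<^esub>)) = Some (i, a)"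
    if "a \<in> carrier A" "a \<noteq> z" for a i
    using that A by (simp add: free_pointed_act_def monoid.r_one)
  have oneF: "Some (i, \<one>\<^bsub>A\<^esub>) \<in> free_pointed_carrier A z I" if "i \<in> I" for i
    using that one onez by (simp add: free_pointed_carrier_def)
  define J where "J = {i\<in>I. s (r (Some (i, \<one>\<^bsub>A\<^esub>))) = Some (i, \<one>\<^bsub>A\<^esub>)}"
  have JI: "J \<subseteq> I" unfolding J_def by auto
  have FJ: "free_pointed_carrier A z J \<subseteq> free_pointed_carrier A z I"
    using JI by (auto simp: free_pointed_carrier_def)
  have key: "s (r p) = p" if p: "p \<in> free_pointed_carrier A z J" for p
  proof (cases p)
    case None then show ?thesis using rN sN by simp
  next
    case (Some q)
    then obtain j a where q: "p = Some (j, a)" and j: "j \<in> J" and a: "a \<in> carrier A" "a \<noteq> z"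
      using p by (auto simp: free_pointed_carrier_def)
    have jI: "j \<in> I" and e: "s (r (Some (j, \<one>\<^bsub>A\<^esub>))) = Some (j, \<one>\<^bsub>A\<^esub>)"
      using j J_def by auto
    have "r p = r (free_pointed_act A z a (Some (j, \<one>\<^bsub>A\<^esub>)))"
      using actone[OF a, of j] q by metis
    also have "\<dots> = act a (r (Some (j, \<one>\<^bsub>A\<^esub>)))"
      by (rule rh[OF oneF[OF jI] a(1)])
    finally have "r p = act a (r (Some (j, \<one>\<^bsub>A\<^esub>)))" .
    then have "s (r p) = free_pointed_act A z a (Some (j, \<one>\<^bsub>A\<^esub>))"
      using sh[OF a(1) rM[OF oneF[OF jI]]] e by simp
    then show ?thesis using actone[OF a] q by simp
  qed
  have hom: "pointed_module_hom A (free_pointed_carrier A z J) None (free_pointed_act A z) M bp act r"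
    using r FJ unfolding pointed_module_hom_def set_module_hom_def by blast
  have inj: "inj_on r (free_pointed_carrier A z J)"
  proof (rule inj_onI)
    fix p q assume p: "p \<in> free_pointed_carrier A z J" and q: "q \<in> free_pointed_carrier A z J"
      and "r p = r q"
    then have "s (r p) = s (r q)" by simp
    then show "p = q" using key[OF p] key[OF q] by simp
  qed
  have img: "r ` free_pointed_carrier A z J = M"
  proof
    show "r ` free_pointed_carrier A z J \<subseteq> M" using rM FJ by auto
  next
    show "M \<subseteq> r ` free_pointed_carrier A z J"
    proof
      fix x assume x: "x \<in> M"
      show "x \<in> r ` free_pointed_carrier A z J"
      proof (cases "s x")
        case None
        then have "x = r None" using rs x by metis
        then show ?thesis by (simp add: free_pointed_carrier_def)
      next
        case (Some q)
        then obtain i a where sx: "s x = Some (i, a)" and iI: "i \<in> I"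
          and a: "a \<in> carrier A" "a \<noteq> z"
          using sF[OF x] by (auto simp: free_pointed_carrier_def)
        have rsx: "s (r (Some (i, a))) = Some (i, a)" using rs x sx by metis
        have "r (Some (i, a)) = act a (r (Some (i, \<one>\<^bsub>A\<^esub>)))"
          using rh[OF oneF[OF iI] a(1)] actone[OF a, of i] by metis
        then have eq: "free_pointed_act A z a (s (r (Some (i, \<one>\<^bsub>A\<^esub>)))) = Some (i, a)"
          using sh[OF a(1) rM[OF oneF[OF iI]]] rsx by simp
        have "s (r (Some (i, \<one>\<^bsub>A\<^esub>))) \<in> free_pointed_carrier A z I"
          using sF rM oneF iI by blast
        then consider "s (r (Some (i, \<one>\<^bsub>A\<^esub>))) = None"
          | j c where "s (r (Some (i, \<one>\<^bsub>A\<^esub>))) = Some (j, c)" "c \<in> carrier A" "c \<noteq> z"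
          by (auto simp: free_pointed_carrier_def)
        then have "i \<in> J"
        proof cases
          case 1 then show ?thesis using eq by (simp add: free_pointed_act_def)
        next
          case 2
          have acz: "a \<otimes>\<^bsub>A\<^esub> c \<noteq> z" using d 2 a unfolding domain_with_zero_def by blast
          then have "Some (j, a \<otimes>\<^bsub>A\<^esub> c) = Some (i, a)"
            using eq 2 by (simp add: free_pointed_act_def)
          then have ji: "j = i" and ac: "a \<otimes>\<^bsub>A\<^esub> c = a \<otimes>\<^bsub>A\<^esub> \<one>\<^bsub>A\<^esub>"
            using a A by (auto simp: monoid.r_one)
          have "c = \<one>\<^bsub>A\<^esub>" using d 2 a ac one onez unfolding domain_with_zero_def by blast
          then show ?thesis using 2 ji iI J_def by auto
        qed
        moreover have "x = r (Some (i, a))" using rs x sx by metis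
        ultimately show ?thesis using a by (auto simp: free_pointed_carrier_def)
      qed
    qed
  qed
  show ?thesis unfolding pointed_module_free_def bij_betw_def using hom inj img by blast
qed

theorem mainTheorem4:
  fixes A :: "('a, 'b) monoid_scheme"
  assumes "comm_monoid A"
  shows "(cancellative A \<longrightarrow>
            (\<forall>(M :: 'm set) act. set_module A M act \<and> set_module_projective A M act
               \<longrightarrow> set_module_free A M act))
       \<and> (\<forall>z. is_zero_of A z \<and> domain_with_zero A z \<longrightarrow>
            (\<forall>(M :: 'm set) bp act. pointed_module A z M bp act \<and> pointed_module_projective A z M bp act
               \<longrightarrow> pointed_module_free A z M bp act))"
proof -
  have A: "monoid A" using assms comm_monoid.axioms(1) by blast
  show ?thesis
  proof (intro conjI impI allI)
    fix M :: "'m set" and act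
    assume "cancellative A" "set_module A M act \<and> set_module_projective A M act"
    then show "set_module_free A M act" using free_case[OF A] by blast
  next
    fix z and M :: "'m set" and bp act
    assume "is_zero_of A z \<and> domain_with_zero A z"
      "pointed_module A z M bp act \<and> pointed_module_projective A z M bp act"
    then show "pointed_module_free A z M bp act" by (intro pointed_case[OF A]) auto
  qed
qed

end
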